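(* Let $k\ge0$ be real. For $x=e^{i\theta}$ on the unit circle with $\cos\theta\ne0$, set $$\Delta_k(x)=k^2-16\cos^2\theta\,(3-4\cos^2\theta),\qquad y_{1}(x)=\frac{k+\sqrt{\Delta_k(x)}}{4\cos\theta},\qquad y_{2}(x)=\frac{k-\sqrt{\Delta_k(x)}}{4\cos\theta}.$$ Then: (i) If $k\ge3$ then $\Delta_k(x)\ge0$, so that $y_1(x)$ and $y_2(x)$ are real. (ii) If $0\le k<3$ then $y_1(x)$ and $y_2(x)$ are complex conjugate to each other whenever $$\frac{3-\sqrt{9-k^2}}8<\cos^2\theta<\frac{3+\sqrt{9-k^2}}8,$$ and in this case $|y_1(x)|=|y_2(x)|=|3-4\cos^2\theta|^{1/2}$. Furthermore, $|y_1(x)|=|y_2(x)|>1$ holds if and only if $\frac{3-\sqrt{9-k^2}}8<\cos^2\theta<\frac12$ when $0\le k<2\sqrt2$, and if and only if $\frac{3-\sqrt{9-k^2}}8<\cos^2\theta<\frac{3+\sqrt{9-k^2}}8$ when $2\sqrt2\le k<3$.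
   Context: $y_1(x),y_2(x)$ are the two roots in $y$ of $(x+x^{-1})y^2-ky-(x^3+x^{-3})=0$ (which equals $-y^3R_k(x/y,1/(xy))$ for $R_k(x,y)=y^3-y+x^3-x+kxy$); their product is $3-4\cos^2\theta$. Here $\sqrt{\cdot}$ is the principal square root. *)

theory Defs
  imports "HOL-Analysis.Analysis"
begin

text \<open>x = e^{i theta}; only cos theta enters.  Delta_k(x) = k^2 - 16 cos^2 theta (3 - 4 cos^2 theta).\<close>
definition Delta :: "real \<Rightarrow> real \<Rightarrow> real" where
  "Delta k \<theta> = k\<^sup>2 - 16 * (cos \<theta>)\<^sup>2 * (3 - 4 * (cos \<theta>)\<^sup>2)"

definition y1 :: "real \<Rightarrow> real \<Rightarrow> complex" where
  "y1 k \<theta> = (complex_of_real k + csqrt (complex_of_real (Delta k \<theta>))) / complex_of_real (4 * cos \<theta>)"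

definition y2 :: "real \<Rightarrow> real \<Rightarrow> complex" where
  "y2 k \<theta> = (complex_of_real k - csqrt (complex_of_real (Delta k \<theta>))) / complex_of_real (4 * cos \<theta>)"

end

theory Submission
  imports Defs
begin

theorem lemma1:
  fixes k \<theta> :: real
  assumes "k \<ge> 0" and "cos \<theta> \<noteq> 0"
  shows "(k \<ge> 3 \<longrightarrow> Delta k \<theta> \<ge> 0 \<and> y1 k \<theta> \<in> \<real> \<and> y2 k \<theta> \<in> \<real>) \<and>
    (k < 3 \<and> (3 - sqrt (9 - k\<^sup>2)) / 8 < (cos \<theta>)\<^sup>2 \<and> (cos \<theta>)\<^sup>2 < (3 + sqrt (9 - k\<^sup>2)) / 8 \<longrightarrow>
       y2 k \<theta> = cnj (y1 k \<theta>) \<and>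
       cmod (y1 k \<theta>) = sqrt \<bar>3 - 4 * (cos \<theta>)\<^sup>2\<bar> \<and>
       cmod (y2 k \<theta>) = sqrt \<bar>3 - 4 * (cos \<theta>)\<^sup>2\<bar> \<and>
       (k < 2 * sqrt 2 \<longrightarrow>
          ((cmod (y1 k \<theta>) = cmod (y2 k \<theta>) \<and> cmod (y1 k \<theta>) > 1) \<longleftrightarrow>
           (3 - sqrt (9 - k\<^sup>2)) / 8 < (cos \<theta>)\<^sup>2 \<and> (cos \<theta>)\<^sup>2 < 1 / 2)) \<and>
       (2 * sqrt 2 \<le> k \<longrightarrow>
          ((cmod (y1 k \<theta>) = cmod (y2 k \<theta>) \<and> cmod (y1 k \<theta>) > 1) \<longleftrightarrow>
           (3 - sqrt (9 - k\<^sup>2)) / 8 < (cos \<theta>)\<^sup>2 \<and> (cos \<theta>)\<^sup>2 < (3 + sqrt (9 - k\<^sup>2)) / 8)))"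
proof -
  define c where "c = cos \<theta>"
  define C where "C = c\<^sup>2"
  have c0: "c \<noteq> 0" using assms(2) c_def by simp
  have Cpos: "C > 0" using c0 C_def by simp
  have DeltaC: "Delta k \<theta> = (8*C - 3)\<^sup>2 + k\<^sup>2 - 9"
    unfolding Delta_def C_def c_def by (simp add: power2_eq_square algebra_simps)
  have P1: "k \<ge> 3 \<longrightarrow> Delta k \<theta> \<ge> 0 \<and> y1 k \<theta> \<in> \<real> \<and> y2 k \<theta> \<in> \<real>"
  proof
    assume k3: "k \<ge> 3"
    have "k\<^sup>2 \<ge> 9" using power_mono[OF k3, of 2] by simp
    hence D: "Delta k \<theta> \<ge> 0" unfolding DeltaC by (smt (verit) zero_le_power2)
    have "y1 k \<theta> = of_real ((k + sqrt (Delta k \<theta>)) / (4 * cos \<theta>))"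
      unfolding y1_def using D by (simp add: csqrt_of_real)
    moreover have "y2 k \<theta> = of_real ((k - sqrt (Delta k \<theta>)) / (4 * cos \<theta>))"
      unfolding y2_def using D by (simp add: csqrt_of_real)
    ultimately show "Delta k \<theta> \<ge> 0 \<and> y1 k \<theta> \<in> \<real> \<and> y2 k \<theta> \<in> \<real>" using D by simp
  qed
  have P2: "k < 3 \<and> (3 - sqrt (9 - k\<^sup>2)) / 8 < C \<and> C < (3 + sqrt (9 - k\<^sup>2)) / 8 \<longrightarrow>
       y2 k \<theta> = cnj (y1 k \<theta>) \<and>
       cmod (y1 k \<theta>) = sqrt \<bar>3 - 4 * C\<bar> \<and>
       cmod (y2 k \<theta>) = sqrt \<bar>3 - 4 * C\<bar> \<and>
       (k < 2 * sqrt 2 \<longrightarrow>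
          ((cmod (y1 k \<theta>) = cmod (y2 k \<theta>) \<and> cmod (y1 k \<theta>) > 1) \<longleftrightarrow>
           (3 - sqrt (9 - k\<^sup>2)) / 8 < C \<and> C < 1 / 2)) \<and>
       (2 * sqrt 2 \<le> k \<longrightarrow>
          ((cmod (y1 k \<theta>) = cmod (y2 k \<theta>) \<and> cmod (y1 k \<theta>) > 1) \<longleftrightarrow>
           (3 - sqrt (9 - k\<^sup>2)) / 8 < C \<and> C < (3 + sqrt (9 - k\<^sup>2)) / 8))"
  proof
    assume H: "k < 3 \<and> (3 - sqrt (9 - k\<^sup>2)) / 8 < C \<and> C < (3 + sqrt (9 - k\<^sup>2)) / 8"
    define r where "r = sqrt (9 - k\<^sup>2)"
    have k2: "k\<^sup>2 < 9" using power_strict_mono[of k 3 2] H assms(1) by simp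
    have r0: "r \<ge> 0" and rr: "r\<^sup>2 = 9 - k\<^sup>2" using k2 r_def by auto
    have abs: "\<bar>8*C - 3\<bar> < r" using H r_def by auto
    have "(8*C-3)\<^sup>2 < r\<^sup>2" using abs r0 by (metis abs_ge_zero abs_power2 power_strict_mono zero_less_numeral power_abs)
    hence Dneg: "Delta k \<theta> < 0" using DeltaC rr by simp
    define s where "s = sqrt (- Delta k \<theta>)"
    have s2: "s\<^sup>2 = - Delta k \<theta>" using Dneg s_def by simp
    have cs: "csqrt (complex_of_real (Delta k \<theta>)) = \<i> * of_real s"
      using Dneg s_def by simp
    have Y1: "y1 k \<theta> = Complex (k / (4*c)) (s / (4*c))"
      unfolding y1_def cs c_def[symmetric] by (simp add: Complex_eq divide_simps c0)
    have Y2: "y2 k \<theta> = Complex (k / (4*c)) (- s / (4*c))"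
      unfolding y2_def cs c_def[symmetric] by (simp add: Complex_eq divide_simps c0)
    have ks: "k\<^sup>2 + s\<^sup>2 = 16 * C * (3 - 4*C)" using s2 unfolding Delta_def C_def c_def
      by (simp add: algebra_simps)
    have "k\<^sup>2 + s\<^sup>2 > 0" using s2 Dneg using zero_le_power2[of k] by linarith
    hence "0 < (16 * C) * (3 - 4*C)" using ks by simp
    hence pos: "3 - 4*C > 0" using Cpos by (simp add: zero_less_mult_iff)
    have "(k / (4*c))\<^sup>2 + (s / (4*c))\<^sup>2 = (k\<^sup>2 + s\<^sup>2) / (16 * C)"
      using c0 unfolding C_def by (simp add: power_divide add_divide_distrib power_mult_distrib)
    also have "\<dots> = 3 - 4*C" using ks Cpos by simp
    finally have sq: "(k / (4*c))\<^sup>2 + (s / (4*c))\<^sup>2 = 3 - 4*C" .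
    have m1: "cmod (y1 k \<theta>) = sqrt \<bar>3 - 4 * C\<bar>" using sq pos unfolding Y1 cmod_def by simp
    have m2: "cmod (y2 k \<theta>) = sqrt \<bar>3 - 4 * C\<bar>" using sq pos unfolding Y2 cmod_def by simp
    have gt: "cmod (y1 k \<theta>) > 1 \<longleftrightarrow> C < 1/2" using m1 pos by auto
    have A: "k < 2 * sqrt 2 \<longrightarrow> 1/2 < (3 + r)/8"
    proof
      assume "k < 2 * sqrt 2"
      hence "k\<^sup>2 < (2 * sqrt 2)\<^sup>2" using assms(1) by (intro power_strict_mono) auto
      hence "k\<^sup>2 < 8" by (simp add: power_mult_distrib)
      hence "1 < r" unfolding r_def by (simp add: real_less_rsqrt)
      thus "1/2 < (3 + r)/8" by simp
    qed
    have B: "2 * sqrt 2 \<le> k \<longrightarrow> (3 + r)/8 \<le> 1/2"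
    proof
      assume "2 * sqrt 2 \<le> k"
      hence "(2 * sqrt 2)\<^sup>2 \<le> k\<^sup>2" by (intro power_mono) auto
      hence "8 \<le> k\<^sup>2" by (simp add: power_mult_distrib)
      hence "r \<le> 1" unfolding r_def by (simp add: real_sqrt_le_1_iff)
      thus "(3 + r)/8 \<le> 1/2" by simp
    qed
    show "y2 k \<theta> = cnj (y1 k \<theta>) \<and>
       cmod (y1 k \<theta>) = sqrt \<bar>3 - 4 * C\<bar> \<and>
       cmod (y2 k \<theta>) = sqrt \<bar>3 - 4 * C\<bar> \<and>
       (k < 2 * sqrt 2 \<longrightarrow>
          ((cmod (y1 k \<theta>) = cmod (y2 k \<theta>) \<and> cmod (y1 k \<theta>) > 1) \<longleftrightarrow>
           (3 - sqrt (9 - k\<^sup>2)) / 8 < C \<and> C < 1 / 2)) \<and>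
       (2 * sqrt 2 \<le> k \<longrightarrow>
          ((cmod (y1 k \<theta>) = cmod (y2 k \<theta>) \<and> cmod (y1 k \<theta>) > 1) \<longleftrightarrow>
           (3 - sqrt (9 - k\<^sup>2)) / 8 < C \<and> C < (3 + sqrt (9 - k\<^sup>2)) / 8))"
    proof (intro conjI impI)
      show "y2 k \<theta> = cnj (y1 k \<theta>)" unfolding Y1 Y2 by (simp add: complex_cnj)
      show "cmod (y1 k \<theta>) = sqrt \<bar>3 - 4 * C\<bar>" by (rule m1)
      show "cmod (y2 k \<theta>) = sqrt \<bar>3 - 4 * C\<bar>" by (rule m2)
    next
      assume "k < 2 * sqrt 2"
      hence "1/2 < (3 + r)/8" using A by blast
      thus "(cmod (y1 k \<theta>) = cmod (y2 k \<theta>) \<and> cmod (y1 k \<theta>) > 1) \<longleftrightarrow>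
           (3 - sqrt (9 - k\<^sup>2)) / 8 < C \<and> C < 1 / 2"
        using m1 m2 gt H r_def by linarith
    next
      assume "2 * sqrt 2 \<le> k"
      hence "(3 + r)/8 \<le> 1/2" using B by blast
      thus "(cmod (y1 k \<theta>) = cmod (y2 k \<theta>) \<and> cmod (y1 k \<theta>) > 1) \<longleftrightarrow>
           (3 - sqrt (9 - k\<^sup>2)) / 8 < C \<and> C < (3 + sqrt (9 - k\<^sup>2)) / 8"
        using m1 m2 gt H r_def by (smt (verit))
    qed
  qed
  show ?thesis using P1 P2 unfolding C_def c_def by blast
qed

end
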